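(* Let $R \subseteq \mathbb{N}$ be computably enumerable and let $A \subseteq \mathbb{N}$ be bi-immune. Then the symmetric difference $A \oplus R = (A - R) \cup (R - A)$ is bi-immune.
   Context: $\mathbb{N}$ denotes the non-negative integers; $\overline{A} = \mathbb{N} - A$. A set $A \subseteq \mathbb{N}$ is immune if (i) $A$ is infinite, and (ii) for every infinite computably enumerable set $R \subseteq \mathbb{N}$, $R \cap \overline{A} \neq \emptyset$ (i.e. $A$ contains no infinite c.e. subset). $A$ is bi-immune if both $A$ and $\overline{A}$ are immune. *)

theory Defs
  imports Main
begin

datatype recf =
    Z
  | S
  | Proj nat
  | Comp recf "recf list"
  | Prim recf recf
  | Mn recf

inductive eval :: "recf \<Rightarrow> nat list \<Rightarrow> nat \<Rightarrow> bool" where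
  eval_Z: "eval Z xs 0"
| eval_S: "eval S (x # xs) (Suc x)"
| eval_Proj: "i < length xs \<Longrightarrow> eval (Proj i) xs (xs ! i)"
| eval_Comp: "list_all2 (\<lambda>g y. eval g xs y) gs ys \<Longrightarrow> eval f ys z \<Longrightarrow> eval (Comp f gs) xs z"
| eval_Prim0: "eval f xs y \<Longrightarrow> eval (Prim f g) (0 # xs) y"
| eval_PrimS: "eval (Prim f g) (n # xs) y \<Longrightarrow> eval g (n # y # xs) z
      \<Longrightarrow> eval (Prim f g) (Suc n # xs) z"
| eval_Mn: "eval f (y # xs) 0 \<Longrightarrow> (\<forall>z<y. \<exists>k. eval f (z # xs) (Suc k))
      \<Longrightarrow> eval (Mn f) xs y"
monos list.rel_mono_strong

definition ce :: "nat set \<Rightarrow> bool" where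
  "ce R \<longleftrightarrow> (\<exists>f. R = {x. \<exists>y. eval f [x] y})"

definition immune :: "nat set \<Rightarrow> bool" where
  "immune A \<longleftrightarrow> infinite A \<and> (\<forall>R. ce R \<and> infinite R \<longrightarrow> R \<inter> (UNIV - A) \<noteq> {})"

definition bi_immune :: "nat set \<Rightarrow> bool" where
  "bi_immune A \<longleftrightarrow> immune A \<and> immune (UNIV - A)"

end

theory Submission
  imports Defs
begin

inductive_cases evZ: "eval Z xs y"
inductive_cases evS: "eval W xs y"
inductive_cases evProj: "eval (Proj i) xs y"
inductive_cases evComp: "eval (Comp f gs) xs y"
inductive_cases evPrim: "eval (Prim f g) xs y"
inductive_cases evMn: "eval (Mn f) xs y"

lemma ce_inter: assumes "ce W" "ce R" shows "ce (W \<inter> R)"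
proof -
  obtain f g where f: "W = {x. \<exists>y. eval f [x] y}" and g: "R = {x. \<exists>y. eval g [x] y}"
    using assms unfolding ce_def by blast
  have "W \<inter> R = {x. \<exists>y. eval (Comp Z [f, g]) [x] y}"
  proof safe
    fix x assume "x \<in> W" "x \<in> R"
    then obtain a b where "eval f [x] a" "eval g [x] b" using f g by blast
    then have "eval (Comp Z [f, g]) [x] 0"
      by (intro eval_Comp[where ys="[a,b]"]) (auto intro: eval_Z)
    then show "\<exists>y. eval (Comp Z [f, g]) [x] y" by blast
  next
    fix x y assume "eval (Comp Z [f, g]) [x] y"
    then show "x \<in> W" using f by (auto elim!: evComp simp: list_all2_Cons1)
  next
    fix x y assume "eval (Comp Z [f, g]) [x] y"
    then show "x \<in> R" using g by (auto elim!: evComp simp: list_all2_Cons1)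
  qed
  then show ?thesis unfolding ce_def by blast
qed

definition PRED :: recf where "PRED = Prim Z (Proj 0)"
definition ISZ :: recf where "ISZ = Prim (Comp S [Z]) Z"

fun predn :: "nat \<Rightarrow> recf" where
  "predn 0 = Proj 1"
| "predn (Suc n) = Comp PRED [predn n]"

lemma PRED_aux: "eval (Prim Z (Proj 0)) [Suc m] m"
proof (induction m)
  case 0
  have "eval (Prim Z (Proj 0)) [0] 0" by (auto intro!: eval_Prim0 eval_Z)
  then show ?case using eval_PrimS[of Z "Proj 0" 0 "[]" 0 0] eval_Proj[of 0 "[0,0]"] by simp
next
  case (Suc k)
  then show ?case using eval_PrimS[of Z "Proj 0" "Suc k" "[]" k "Suc k"] eval_Proj[of 0 "[Suc k, k]"] by simp
qed

lemma PRED_eval: "eval PRED [x] (x - 1)"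
  unfolding PRED_def
  by (cases x) (auto intro!: eval_Prim0 eval_Z PRED_aux)

lemma PRED_det: "eval PRED [x] v \<Longrightarrow> v = x - 1"
  unfolding PRED_def
  apply (erule evPrim)
   apply (auto elim!: evZ evProj)
  done

lemma predn_eval: "eval (predn n) [y, x] (x - n)"
proof (induction n)
  case 0 then show ?case using eval_Proj[of 1 "[y,x]"] by simp
next
  case (Suc n)
  have "eval PRED [x - n] (x - Suc n)" using PRED_eval[of "x - n"] by simp
  then show ?case using Suc by (auto intro!: eval_Comp[where ys="[x - n]"])
qed

lemma predn_det: "eval (predn n) [y, x] v \<Longrightarrow> v = x - n"
proof (induction n arbitrary: v)
  case 0 then show ?case by (auto elim!: evProj)
next
  case (Suc n)
  from Suc.prems obtain z where z: "eval (predn n) [y, x] z" "eval PRED [z] v"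
    by (auto elim!: evComp simp: list_all2_Cons1)
  then show ?case using Suc.IH[OF z(1)] PRED_det[OF z(2)] by simp
qed

lemma ISZ_tot: "eval ISZ [m] (if m = 0 then 1 else 0)"
  unfolding ISZ_def
proof (induction m)
  case 0 then show ?case
    by (auto intro!: eval_Prim0 eval_Comp[where ys="[0]"] eval_Z eval_S[of 0 "[]", simplified])
next
  case (Suc m)
  then show ?case by (auto intro: eval_PrimS eval_Z)
qed

lemma ISZ_pos: "eval ISZ [Suc m] 0"
  using ISZ_tot[of "Suc m"] by simp

lemma ISZ_zero: "eval ISZ [0] v \<Longrightarrow> v = 1"
  unfolding ISZ_def
  apply (erule evPrim)
   apply (auto elim!: evComp evS evZ simp: list_all2_Cons1)
  done

lemma ce_gt: "ce {x. n < x}"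
proof -
  define F where "F = Comp ISZ [predn n]"
  have "{x. n < x} = {x. \<exists>y. eval (Mn F) [x] y}"
  proof safe
    fix x assume "n < x"
    then obtain m where m: "x - n = Suc m" by (cases "x - n") auto
    have "eval F [0, x] 0" unfolding F_def
      using predn_eval[of n 0 x] ISZ_pos[of m] m
      by (auto intro!: eval_Comp[where ys="[x - n]"])
    then have "eval (Mn F) [x] 0" by (auto intro: eval_Mn)
    then show "\<exists>y. eval (Mn F) [x] y" by blast
  next
    fix x y assume "eval (Mn F) [x] y"
    then have "eval F [y, x] 0" by (auto elim!: evMn)
    then obtain v where "eval (predn n) [y, x] v" "eval ISZ [v] 0"
      unfolding F_def by (auto elim!: evComp simp: list_all2_Cons1)
    then have "eval ISZ [x - n] 0" using predn_det by blast
    then show "n < x" using ISZ_zero by (cases "x - n") fastforce+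
  qed
  then show ?thesis unfolding ce_def by blast
qed

lemma cut_infinite: assumes "ce W" "infinite W" "finite (W \<inter> R)"
  shows "\<exists>T. ce T \<and> infinite T \<and> T \<subseteq> W - R"
proof -
  obtain n where n: "\<forall>x\<in>W \<inter> R. x \<le> n"
    using assms(3) by (meson finite_nat_set_iff_bounded_le)
  let ?T = "W \<inter> {x. n < x}"
  have "ce ?T" using ce_inter[OF assms(1) ce_gt] .
  moreover have "infinite ?T"
  proof
    assume "finite ?T"
    moreover have "W \<subseteq> ?T \<union> {..n}" by auto
    ultimately have "finite W" using finite_subset by (metis finite_Un finite_atMost)
    then show False using assms(2) by simp
  qed
  moreover have "?T \<subseteq> W - R"
  proof
    fix x assume x: "x \<in> ?T"
    show "x \<in> W - R"
    proof
      show "x \<in> W" using x by simp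
      show "x \<notin> R" using x n by force
    qed
  qed
  ultimately show ?thesis by (intro exI[of _ ?T]) simp
qed

lemma key: assumes "ce R" "immune A" "immune (UNIV - A)"
  shows "\<forall>W. ce W \<and> infinite W \<longrightarrow> W \<inter> (UNIV - ((A - R) \<union> (R - A))) \<noteq> {}"
proof (intro allI impI notI)
  fix W assume W: "ce W \<and> infinite W" and E: "W \<inter> (UNIV - ((A - R) \<union> (R - A))) = {}"
  have sub: "W \<subseteq> (A - R) \<union> (R - A)" using E by blast
  have "finite (W \<inter> R)"
  proof (rule ccontr)
    assume "infinite (W \<inter> R)"
    moreover have "ce (W \<inter> R)" using ce_inter W assms(1) by blast
    ultimately have "(W \<inter> R) \<inter> (UNIV - (UNIV - A)) \<noteq> {}"
      using assms(3) unfolding immune_def by blast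
    then show False using sub by blast
  qed
  then obtain T where "ce T" "infinite T" "T \<subseteq> W - R" using cut_infinite W by blast
  then have "T \<inter> (UNIV - A) \<noteq> {}" using assms(2) unfolding immune_def by blast
  then show False using \<open>T \<subseteq> W - R\<close> sub by blast
qed

lemma inf_part: assumes "ce R" "immune A" "immune (UNIV - A)"
  shows "infinite ((A - R) \<union> (R - A))"
proof
  assume fin: "finite ((A - R) \<union> (R - A))"
  have "infinite R"
  proof
    assume "finite R"
    then have "finite (A - R \<union> R)" using fin by simp
    moreover have "A \<subseteq> A - R \<union> R" by blast
    ultimately have "finite A" by (rule finite_subset[rotated])
    then show False using assms(2) unfolding immune_def by simp
  qed
  have "R \<inter> (UNIV - A) \<subseteq> (A - R) \<union> (R - A)" by blast
  then have "finite (R \<inter> (UNIV - A))" using fin by (rule finite_subset)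
  then obtain T where T: "ce T" "infinite T" "T \<subseteq> R - (UNIV - A)"
    using cut_infinite[OF assms(1) \<open>infinite R\<close>] by blast
  then have "T \<inter> (UNIV - A) \<noteq> {}" using assms(2) unfolding immune_def by blast
  moreover have "T \<inter> (UNIV - A) = {}" using T(3) by blast
  ultimately show False by simp
qed

lemma imm: assumes "ce R" "immune A" "immune (UNIV - A)"
  shows "immune ((A - R) \<union> (R - A))"
  unfolding immune_def using key[OF assms] inf_part[OF assms] by blast

lemma ce_sym: "(UNIV - ((A - R) \<union> (R - A))) = ((UNIV - A) - R) \<union> (R - (UNIV - A))"
  by blast

theorem lemma2p3:
  fixes A R :: "nat set"
  assumes "ce R" and "bi_immune A"
  shows "bi_immune ((A - R) \<union> (R - A))"
proof -
  have a: "immune A" "immune (UNIV - A)" using assms(2) unfolding bi_immune_def by auto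
  have b: "UNIV - (UNIV - A) = A" by blast
  have "immune ((UNIV - A - R) \<union> (R - (UNIV - A)))"
    using imm[OF assms(1) a(2)] a(1) b by simp
  then show ?thesis using imm[OF assms(1) a] unfolding bi_immune_def ce_sym by simp
qed

end
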